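(* Let $\varepsilon,\Delta t,\Delta x_1,\Delta x_2,\underline{\rho},\underline{a}>0$, $\underline{\mathbf{u}}=(\underline{u}_1,\underline{u}_2)\in\mathbb{R}^2$ and $b^{(2)}_1,b^{(2)}_2,b^{(2)}_3\in\mathbb{R}$. Let $(\rho,\mathbf{u})\in C^1([0,\infty);H^2(\mathbb{T}^2)^3)$ solve $$\partial_t\begin{pmatrix}\rho\\ \mathbf{u}\end{pmatrix}+(\underline{\mathbf{u}}\cdot\nabla)\begin{pmatrix}\rho\\ \mathbf{u}\end{pmatrix}+\begin{pmatrix}\underline{\rho}\nabla\cdot\mathbf{u}\\ \frac{\underline{a}^2}{\underline{\rho}\varepsilon^2}\nabla\rho\end{pmatrix}=\mathcal{B}^{(2)}\begin{pmatrix}\rho\\ \mathbf{u}\end{pmatrix}$$ on $\mathbb{T}^2$, with $\mathcal{B}^{(2)}$ as in the context. If $(\rho(0,\cdot),\mathbf{u}(0,\cdot))\in\mathcal{E}$, then $(\rho(t,\cdot),\mathbf{u}(t,\cdot))\in\mathcal{E}$ for all $t>0$.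
   Context: $\mathcal{E}=\{(\rho,\mathbf{u})\in L^2(\mathbb{T}^2)^{3}:\nabla\rho=0,\ \nabla\cdot\mathbf{u}=0\}$. With $D=\underline{\mathbf{u}}\cdot\nabla$: $\mathcal{B}^{(2)}_{1,1}=\Delta t\big(b^{(2)}_1D^2+b^{(2)}_3\frac{\underline{a}^2}{\varepsilon^2}\Delta\big)+\frac12\sum_{k=1}^2\Delta x_k|\underline{u}_k|\partial_{x_k}^2$, $\mathcal{B}^{(2)}_{1,2}=\Delta t\,\underline{\rho}\,b^{(2)}_2D\nabla\cdot$, $\mathcal{B}^{(2)}_{2,1}=\Delta t\frac{\underline{a}^2}{\underline{\rho}\varepsilon^2}b^{(2)}_2D\nabla$, $\mathcal{B}^{(2)}_{2,2}=\Delta t\big(b^{(2)}_1D^2+b^{(2)}_3\frac{\underline{a}^2}{\varepsilon^2}\nabla\nabla\cdot\big)+\frac12\sum_{k=1}^2\Delta x_k|\underline{u}_k|\partial_{x_k}^2\mathbb{I}_2$ (first row scalar, second row vector valued). This is the modified equation of a first order fully-discrete IMEX-RK finite volume scheme applied to the linear wave system; in the paper the $b^{(2)}_i$ are specific polynomials in the Butcher coefficients. *)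

theory Defs
  imports "HOL-Analysis.Analysis"
begin

text \<open>Functions on the torus T^2 = R^2/(2 pi Z)^2 are represented by their Fourier
coefficients: c represents f(x) = sum over k in Z^2 of c k * exp(i k.x).
Real-valuedness is the Hermitian symmetry c(-k) = cnj(c k).
Weak derivatives are Fourier multipliers: d/dx_j  <->  i k_j.\<close>

type_synonym coef = "int \<times> int \<Rightarrow> complex"

definition real_valued :: "coef \<Rightarrow> bool" where
  "real_valued c \<longleftrightarrow> (\<forall>k. c (- fst k, - snd k) = cnj (c k))"

definition sob_weight :: "int \<times> int \<Rightarrow> real" where
  "sob_weight k = (1 + (of_int (fst k))\<^sup>2 + (of_int (snd k))\<^sup>2)\<^sup>2"

text \<open>L^2(T^2) (real valued) and H^2(T^2) (real valued), via Parseval.\<close>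
definition L2 :: "coef set" where
  "L2 = {c. real_valued c \<and> (\<lambda>k. (cmod (c k))\<^sup>2) summable_on UNIV}"

definition H2 :: "coef set" where
  "H2 = {c. real_valued c \<and> (\<lambda>k. sob_weight k * (cmod (c k))\<^sup>2) summable_on UNIV}"

definition h2norm :: "coef \<Rightarrow> real" where
  "h2norm c = sqrt (infsum (\<lambda>k. sob_weight k * (cmod (c k))\<^sup>2) UNIV)"

definition C1_H2 :: "(real \<Rightarrow> coef) \<Rightarrow> (real \<Rightarrow> coef) \<Rightarrow> bool" where
  "C1_H2 X X' \<longleftrightarrow> (\<forall>t\<ge>0. X t \<in> H2 \<and> X' t \<in> H2 \<and>
     ((\<lambda>s. h2norm (\<lambda>k. (X s k - X t k) / complex_of_real (s - t) - X' t k)) \<longlongrightarrow> 0)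
        (at t within {0..}) \<and>
     ((\<lambda>s. h2norm (\<lambda>k. X' s k - X' t k)) \<longlongrightarrow> 0) (at t within {0..}))"

definition dx1 :: "coef \<Rightarrow> coef" where
  "dx1 c = (\<lambda>k. \<i> * of_int (fst k) * c k)"

definition dx2 :: "coef \<Rightarrow> coef" where
  "dx2 c = (\<lambda>k. \<i> * of_int (snd k) * c k)"

definition dxj :: "nat \<Rightarrow> coef \<Rightarrow> coef" where
  "dxj j = (if j = 1 then dx1 else dx2)"

definition div2 :: "coef \<Rightarrow> coef \<Rightarrow> coef" where
  "div2 v1 v2 = (\<lambda>k. dx1 v1 k + dx2 v2 k)"

definition lap :: "coef \<Rightarrow> coef" where
  "lap c = (\<lambda>k. dx1 (dx1 c) k + dx2 (dx2 c) k)"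

text \<open>D = ubar . grad, with ubar = (w1, w2).\<close>
definition Dop :: "real \<Rightarrow> real \<Rightarrow> coef \<Rightarrow> coef" where
  "Dop w1 w2 c = (\<lambda>k. complex_of_real w1 * dx1 c k + complex_of_real w2 * dx2 c k)"

definition numdiff :: "real \<Rightarrow> real \<Rightarrow> real \<Rightarrow> real \<Rightarrow> coef \<Rightarrow> coef" where
  "numdiff Dx1 Dx2 w1 w2 c = (\<lambda>k. complex_of_real (1/2) *
     (complex_of_real (Dx1 * \<bar>w1\<bar>) * dx1 (dx1 c) k + complex_of_real (Dx2 * \<bar>w2\<bar>) * dx2 (dx2 c) k))"

definition Brow1 :: "real \<Rightarrow> real \<Rightarrow> real \<Rightarrow> real \<Rightarrow> real \<Rightarrow> real \<Rightarrow> real \<Rightarrow> real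
    \<Rightarrow> real \<Rightarrow> real \<Rightarrow> real \<Rightarrow> coef \<Rightarrow> coef \<Rightarrow> coef \<Rightarrow> coef" where
  "Brow1 \<epsilon> Dt Dx1 Dx2 rb ab w1 w2 b1 b2 b3 r v1 v2 = (\<lambda>k.
     complex_of_real Dt * (complex_of_real b1 * Dop w1 w2 (Dop w1 w2 r) k
        + complex_of_real (b3 * ab\<^sup>2 / \<epsilon>\<^sup>2) * lap r k)
     + numdiff Dx1 Dx2 w1 w2 r k
     + complex_of_real (Dt * rb * b2) * Dop w1 w2 (div2 v1 v2) k)"

definition Brow2 :: "nat \<Rightarrow> real \<Rightarrow> real \<Rightarrow> real \<Rightarrow> real \<Rightarrow> real \<Rightarrow> real \<Rightarrow> real \<Rightarrow> real
    \<Rightarrow> real \<Rightarrow> real \<Rightarrow> real \<Rightarrow> coef \<Rightarrow> coef \<Rightarrow> coef \<Rightarrow> coef" where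
  "Brow2 j \<epsilon> Dt Dx1 Dx2 rb ab w1 w2 b1 b2 b3 r v1 v2 = (\<lambda>k.
     complex_of_real (Dt * ab\<^sup>2 / (rb * \<epsilon>\<^sup>2) * b2) * Dop w1 w2 (dxj j r) k
     + complex_of_real Dt * (complex_of_real b1 * Dop w1 w2 (Dop w1 w2 (if j = 1 then v1 else v2)) k
        + complex_of_real (b3 * ab\<^sup>2 / \<epsilon>\<^sup>2) * dxj j (div2 v1 v2) k)
     + numdiff Dx1 Dx2 w1 w2 (if j = 1 then v1 else v2) k)"

definition Eset :: "(coef \<times> coef \<times> coef) set" where
  "Eset = {(r, v1, v2). r \<in> L2 \<and> v1 \<in> L2 \<and> v2 \<in> L2 \<and>
      dx1 r = (\<lambda>k. 0) \<and> dx2 r = (\<lambda>k. 0) \<and> div2 v1 v2 = (\<lambda>k. 0)}"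

end

theory Submission
  imports Defs
begin

definition sw :: "coef \<Rightarrow> bool" where
  "sw c \<longleftrightarrow> (\<lambda>k. sob_weight k * (cmod (c k))\<^sup>2) summable_on UNIV"

lemma sob_ge1: "sob_weight k \<ge> 1"
  unfolding sob_weight_def by (simp add: one_le_power)

lemma sob_nn: "0 \<le> sob_weight k * (cmod z)\<^sup>2"
  using sob_ge1[of k] by simp

lemma sw_add: assumes "sw c" "sw e" shows "sw (\<lambda>k. c k + e k)"
proof -
  have s: "(\<lambda>k. 2 * (sob_weight k * (cmod (c k))\<^sup>2) + 2 * (sob_weight k * (cmod (e k))\<^sup>2)) summable_on UNIV"
    using assms unfolding sw_def
    by (intro summable_on_add summable_on_cmult_right)
  have b: "sob_weight k * (cmod (c k + e k))\<^sup>2 \<le> 2 * (sob_weight k * (cmod (c k))\<^sup>2) + 2 * (sob_weight k * (cmod (e k))\<^sup>2)" for k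
  proof -
    have "(cmod (c k + e k))\<^sup>2 \<le> (cmod (c k) + cmod (e k))\<^sup>2"
      by (simp add: norm_triangle_ineq power_mono)
    also have "\<dots> \<le> 2 * (cmod (c k))\<^sup>2 + 2 * (cmod (e k))\<^sup>2"
      by (smt (verit) sum_squares_bound power2_sum)
    finally have "(cmod (c k + e k))\<^sup>2 \<le> 2 * (cmod (c k))\<^sup>2 + 2 * (cmod (e k))\<^sup>2" .
    moreover have "sob_weight k \<ge> 0" using sob_ge1[of k] by simp
    ultimately show ?thesis by (smt (verit) distrib_left mult_left_mono mult.left_commute)
  qed
  show ?thesis unfolding sw_def
    by (rule summable_on_comparison_test[OF s]) (use b sob_nn in auto)
qed

lemma sw_scale: assumes "sw c" shows "sw (\<lambda>k. a * c k)"
proof -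
  have "(\<lambda>k. (cmod a)\<^sup>2 * (sob_weight k * (cmod (c k))\<^sup>2)) summable_on UNIV"
    using assms unfolding sw_def by (intro summable_on_cmult_right)
  then show ?thesis unfolding sw_def by (simp add: norm_mult power_mult_distrib mult.commute mult.left_commute)
qed

lemma coef_le: assumes "sw c" shows "cmod (c k) \<le> h2norm c"
proof -
  have "(cmod (c k))\<^sup>2 \<le> sob_weight k * (cmod (c k))\<^sup>2"
    using sob_ge1[of k] by (simp add: mult_le_cancel_right1)
  also have "\<dots> = infsum (\<lambda>k. sob_weight k * (cmod (c k))\<^sup>2) {k}" by simp
  also have "\<dots> \<le> infsum (\<lambda>k. sob_weight k * (cmod (c k))\<^sup>2) UNIV"
    by (rule infsum_mono_neutral) (use assms sob_nn in \<open>auto simp: sw_def\<close>)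
  finally show ?thesis unfolding h2norm_def by (simp add: real_le_rsqrt)
qed

lemma H2_sw: "c \<in> H2 \<Longrightarrow> sw c" by (simp add: H2_def sw_def)

lemma quot_sw:
  assumes "sw a" "sw b" "sw d"
  shows "sw (\<lambda>k. (a k - b k) / complex_of_real h - d k)"
proof -
  have "sw (\<lambda>k. inverse (complex_of_real h) * (a k + (-1) * b k) + (-1) * d k)"
    using assms by (intro sw_add sw_scale)
  then show ?thesis by (simp add: divide_inverse mult.commute)
qed

lemma coef_deriv:
  assumes "C1_H2 X X'" "t \<ge> 0"
  shows "((\<lambda>s. Re (X s k)) has_real_derivative Re (X' t k)) (at t within {0..})"
    and "((\<lambda>s. Im (X s k)) has_real_derivative Im (X' t k)) (at t within {0..})"
proof -
  let ?Q = "\<lambda>s. (\<lambda>k. (X s k - X t k) / complex_of_real (s - t) - X' t k)"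
  have lim: "((\<lambda>s. h2norm (?Q s)) \<longlongrightarrow> 0) (at t within {0..})"
    using assms unfolding C1_H2_def by auto
  have bd: "cmod (?Q s k) \<le> h2norm (?Q s)" if "s \<ge> 0" for s
  proof -
    have "X s \<in> H2" "X t \<in> H2" "X' t \<in> H2" using assms that unfolding C1_H2_def by auto
    then have "sw (?Q s)" by (intro quot_sw H2_sw)
    then show ?thesis by (rule coef_le)
  qed
  have ev: "eventually (\<lambda>s. s \<ge> 0) (at t within {0..})"
    by (simp add: eventually_at_filter)
  show "((\<lambda>s. Re (X s k)) has_real_derivative Re (X' t k)) (at t within {0..})"
    unfolding has_field_derivative_iff
  proof (subst Lim_null, rule Lim_null_comparison[OF _ lim])
    show "\<forall>\<^sub>F x in at t within {0..}. norm ((Re (X x k) - Re (X t k)) / (x - t) - Re (X' t k)) \<le> h2norm (?Q x)"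
      using ev
    proof eventually_elim
      case (elim s)
      have "norm ((Re (X s k) - Re (X t k)) / (s - t) - Re (X' t k)) = \<bar>Re (?Q s k)\<bar>" by simp
      also have "\<dots> \<le> cmod (?Q s k)" by (rule abs_Re_le_cmod)
      finally show ?case using bd[OF elim] by linarith
    qed
  qed
  show "((\<lambda>s. Im (X s k)) has_real_derivative Im (X' t k)) (at t within {0..})"
    unfolding has_field_derivative_iff
  proof (subst Lim_null, rule Lim_null_comparison[OF _ lim])
    show "\<forall>\<^sub>F x in at t within {0..}. norm ((Im (X x k) - Im (X t k)) / (x - t) - Im (X' t k)) \<le> h2norm (?Q x)"
      using ev
    proof eventually_elim
      case (elim s)
      have "norm ((Im (X s k) - Im (X t k)) / (s - t) - Im (X' t k)) = \<bar>Im (?Q s k)\<bar>" by simp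
      also have "\<dots> \<le> cmod (?Q s k)" by (rule abs_Im_le_cmod)
      finally show ?case using bd[OF elim] by linarith
    qed
  qed
qed

lemma Re_cnj_le: "Re y * Re y' + Im y * Im y' \<le> cmod y * cmod y'"
proof -
  have "Re y * Re y' + Im y * Im y' = Re (cnj y * y')" by simp
  also have "\<dots> \<le> cmod (cnj y * y')" by (rule complex_Re_le_cmod)
  finally show ?thesis by (simp add: norm_mult)
qed

lemma sq_deriv:
  assumes "(g has_real_derivative g') (at x within S)"
  shows "((\<lambda>s. (g s)\<^sup>2) has_real_derivative 2 * g x * g') (at x within S)"
  using DERIV_mult[OF assms assms] by (simp add: power2_eq_square algebra_simps)

lemma lin_ode_zero:
  fixes y z y' z' :: "real \<Rightarrow> complex" and \<alpha> \<beta> \<gamma> \<delta> :: complex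
  assumes d1: "\<And>s. s \<ge> 0 \<Longrightarrow> ((\<lambda>s. Re (y s)) has_real_derivative Re (y' s)) (at s within {0..})"
    and d2: "\<And>s. s \<ge> 0 \<Longrightarrow> ((\<lambda>s. Im (y s)) has_real_derivative Im (y' s)) (at s within {0..})"
    and d3: "\<And>s. s \<ge> 0 \<Longrightarrow> ((\<lambda>s. Re (z s)) has_real_derivative Re (z' s)) (at s within {0..})"
    and d4: "\<And>s. s \<ge> 0 \<Longrightarrow> ((\<lambda>s. Im (z s)) has_real_derivative Im (z' s)) (at s within {0..})"
    and ey: "\<And>s. s \<ge> 0 \<Longrightarrow> y' s = \<alpha> * y s + \<beta> * z s"
    and ez: "\<And>s. s \<ge> 0 \<Longrightarrow> z' s = \<gamma> * y s + \<delta> * z s"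
    and y0: "y 0 = 0" and z0: "z 0 = 0" and t: "t \<ge> 0"
  shows "y t = 0 \<and> z t = 0"
proof -
  define M where "M = cmod \<alpha> + cmod \<beta> + cmod \<gamma> + cmod \<delta>"
  define C where "C = 4 * M"
  define E where "E = (\<lambda>s. (Re (y s))\<^sup>2 + (Im (y s))\<^sup>2 + (Re (z s))\<^sup>2 + (Im (z s))\<^sup>2)"
  define E' where "E' = (\<lambda>s. 2 * (Re (y s) * Re (y' s) + Im (y s) * Im (y' s) + Re (z s) * Re (z' s) + Im (z s) * Im (z' s)))"
  define f where "f = (\<lambda>s. E s * exp (- (C * s)))"
  define f' where "f' = (\<lambda>s. E' s * exp (- (C * s)) - C * E s * exp (- (C * s)))"
  have Ecm: "E s = (cmod (y s))\<^sup>2 + (cmod (z s))\<^sup>2" for s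
    unfolding E_def cmod_power2 by simp
  have dE: "(E has_real_derivative E' s) (at s within {0..})" if "s \<ge> 0" for s
    unfolding E_def E'_def
    using DERIV_add[OF DERIV_add[OF DERIV_add[OF sq_deriv[OF d1[OF that]] sq_deriv[OF d2[OF that]]]
      sq_deriv[OF d3[OF that]]] sq_deriv[OF d4[OF that]]]
    by (simp add: algebra_simps)
  have df: "(f has_real_derivative f' s) (at s within {0..})" if "s \<ge> 0" for s
    unfolding f_def f'_def
    by (rule derivative_eq_intros dE that | simp)+
  have M0: "M \<ge> 0" unfolding M_def by simp
  have E'le: "E' s \<le> C * E s" if "s \<ge> 0" for s
  proof -
    let ?a = "cmod (y s)" and ?b = "cmod (z s)"
    have "cmod (y' s) \<le> cmod \<alpha> * ?a + cmod \<beta> * ?b"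
      using ey[OF that] by (metis norm_mult norm_triangle_ineq)
    also have "\<dots> \<le> M * (?a + ?b)"
      unfolding M_def by (simp add: algebra_simps add_mono mult_right_mono)
    finally have h1: "cmod (y' s) \<le> M * (?a + ?b)" .
    have "cmod (z' s) \<le> cmod \<gamma> * ?a + cmod \<delta> * ?b"
      using ez[OF that] by (metis norm_mult norm_triangle_ineq)
    also have "\<dots> \<le> M * (?a + ?b)"
      unfolding M_def by (simp add: algebra_simps add_mono mult_right_mono)
    finally have h2: "cmod (z' s) \<le> M * (?a + ?b)" .
    have "E' s \<le> 2 * (?a * cmod (y' s) + ?b * cmod (z' s))"
      unfolding E'_def using Re_cnj_le[of "y s" "y' s"] Re_cnj_le[of "z s" "z' s"] by (smt (verit))
    also have "\<dots> \<le> 2 * (?a * (M * (?a + ?b)) + ?b * (M * (?a + ?b)))"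
      using h1 h2 by (intro mult_left_mono add_mono) auto
    also have "\<dots> = 2 * M * (?a + ?b)\<^sup>2" by (simp add: algebra_simps power2_eq_square)
    also have "\<dots> \<le> 2 * M * (2 * (?a\<^sup>2 + ?b\<^sup>2))"
      by (rule mult_left_mono) (use M0 sum_squares_bound[of ?a ?b] in \<open>auto simp: power2_sum\<close>)
    also have "\<dots> = C * E s" unfolding C_def Ecm by simp
    finally show ?thesis .
  qed
  have f'le: "f' s \<le> 0" if "s \<ge> 0" for s
    using E'le[OF that] unfolding f'_def
    by (simp add: mult_nonpos_nonneg flip: left_diff_distrib)
  have f0: "f 0 = 0" unfolding f_def E_def using y0 z0 by simp
  have Et: "E t = 0"
  proof (cases "t = 0")
    case True then show ?thesis using y0 z0 unfolding E_def by simp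
  next
    case False
    then have tp: "0 < t" using t by simp
    have "\<exists>x\<in>{0<..<t}. f t - f 0 = (\<lambda>h. f' x * h) (t - 0)"
    proof (rule mvt_simple[OF tp])
      fix x assume x: "0 \<le> x" "x \<le> t"
      have "(f has_real_derivative f' x) (at x within {0..})" using df x by simp
      then have "(f has_real_derivative f' x) (at x within {0..t})"
        by (rule has_field_derivative_subset) auto
      then show "(f has_derivative (\<lambda>h. f' x * h)) (at x within {0..t})"
        by (simp add: has_field_derivative_def)
    qed
    then obtain x where x: "x \<in> {0<..<t}" "f t - f 0 = f' x * (t - 0)" by auto
    have "f t \<le> 0" using x f0 f'le[of x] tp by (simp add: mult_nonpos_nonneg)
    moreover have "E t \<ge> 0" unfolding E_def by simp
    ultimately have "E t * exp (- (C * t)) \<le> 0" unfolding f_def by simp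
    then show ?thesis using \<open>E t \<ge> 0\<close> by (simp add: mult_le_0_iff)
  qed
  then have "cmod (y t) = 0 \<and> cmod (z t) = 0" unfolding Ecm
    by (metis add_nonneg_eq_0_iff zero_le_power2 zero_eq_power2)
  then show ?thesis by simp
qed


abbreviation om :: "real \<Rightarrow> real \<Rightarrow> int \<times> int \<Rightarrow> real" where
  "om w1 w2 k \<equiv> w1 * of_int (fst k) + w2 * of_int (snd k)"

lemma ii: "\<i> * x * (\<i> * y * c) = - (x * y * c)"
proof -
  have "\<i> * x * (\<i> * y * c) = (\<i> * \<i>) * (x * y * c)" by (simp only: mult_ac)
  then show ?thesis by simp
qed

lemma ii2: "\<i> * x * (\<i> * d) = - (x * d)"
proof -
  have "\<i> * x * (\<i> * d) = (\<i> * \<i>) * (x * d)" by (simp only: mult_ac)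
  then show ?thesis by simp
qed

lemma Dop_at: "Dop w1 w2 c k = \<i> * of_real (om w1 w2 k) * c k"
  unfolding Dop_def dx1_def dx2_def by (simp add: algebra_simps)

lemma DopDop: "Dop w1 w2 (Dop w1 w2 c) k = - (of_real ((om w1 w2 k)\<^sup>2) * c k)"
  unfolding Dop_at[of _ _ "Dop w1 w2 c"] Dop_at[of _ _ c] ii by (simp add: power2_eq_square)

lemma dx1_at: "dx1 c k = \<i> * of_int (fst k) * c k" by (simp add: dx1_def)
lemma dx2_at: "dx2 c k = \<i> * of_int (snd k) * c k" by (simp add: dx2_def)

lemma lap_at: "lap c k = - (of_real ((of_int (fst k))\<^sup>2 + (of_int (snd k))\<^sup>2) * c k)"
  unfolding lap_def dx1_at[of "dx1 c"] dx2_at[of "dx2 c"] dx1_at[of c] dx2_at[of c] ii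
  by (simp add: power2_eq_square distrib_right)

lemma numdiff_at: "numdiff Dx1 Dx2 w1 w2 c k = - (of_real (1/2 * (Dx1 * \<bar>w1\<bar> * (of_int (fst k))\<^sup>2 + Dx2 * \<bar>w2\<bar> * (of_int (snd k))\<^sup>2)) * c k)"
  unfolding numdiff_def dx1_at[of "dx1 c"] dx2_at[of "dx2 c"] dx1_at[of c] dx2_at[of c] ii
  by (simp add: power2_eq_square distrib_right distrib_left mult.assoc)

lemma div2_at: "div2 v1 v2 k = \<i> * (of_int (fst k) * v1 k + of_int (snd k) * v2 k)"
  unfolding div2_def dx1_at dx2_at by (simp add: algebra_simps)

lemma Dop_div2: "Dop w1 w2 (div2 v1 v2) k = - (of_real (om w1 w2 k) * (of_int (fst k) * v1 k + of_int (snd k) * v2 k))"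
  unfolding Dop_at[of _ _ "div2 v1 v2"] div2_at ii2 ..

lemma Dop_dx1: "Dop w1 w2 (dx1 c) k = - (of_real (om w1 w2 k) * (of_int (fst k) * c k))"
  unfolding Dop_at[of _ _ "dx1 c"] dx1_at ii by (simp add: mult.assoc)
lemma Dop_dx2: "Dop w1 w2 (dx2 c) k = - (of_real (om w1 w2 k) * (of_int (snd k) * c k))"
  unfolding Dop_at[of _ _ "dx2 c"] dx2_at ii by (simp add: mult.assoc)
lemma dx1_div2: "dx1 (div2 v1 v2) k = - (of_int (fst k) * (of_int (fst k) * v1 k + of_int (snd k) * v2 k))"
  unfolding dx1_at[of "div2 v1 v2"] div2_at ii2 ..
lemma dx2_div2: "dx2 (div2 v1 v2) k = - (of_int (snd k) * (of_int (fst k) * v1 k + of_int (snd k) * v2 k))"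
  unfolding dx2_at[of "div2 v1 v2"] div2_at ii2 ..

lemma alg_z:
  fixes A B W W2 N T B1 Q P C V1 V2 R :: complex
  shows "A * ((P * -(W * (A * R)) + T * (B1 * -(W2 * V1) + Q * -(A * (A*V1 + B*V2))) + -(N * V1))
            - \<i>*W*V1 - C * (\<i> * A * R))
       + B * ((P * -(W * (B * R)) + T * (B1 * -(W2 * V2) + Q * -(B * (A*V1 + B*V2))) + -(N * V2))
            - \<i>*W*V2 - C * (\<i> * B * R))
       = (P * -(W * (A*A+B*B)) - C*\<i>*(A*A+B*B)) * R + (T * (B1 * -W2 + Q * -(A*A+B*B)) - N - \<i>*W) * (A*V1+B*V2)"
  by (simp add: algebra_simps)

theorem mainTheorem7:
  fixes \<epsilon> Dt Dx1 Dx2 rb ab w1 w2 b1 b2 b3 :: real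
    and r r' v1 v1' v2 v2' :: "real \<Rightarrow> coef"
  assumes pos: "\<epsilon> > 0" "Dt > 0" "Dx1 > 0" "Dx2 > 0" "rb > 0" "ab > 0"
    and reg: "C1_H2 r r'" "C1_H2 v1 v1'" "C1_H2 v2 v2'"
    and eq_rho: "\<And>t. t \<ge> 0 \<Longrightarrow>
       (\<lambda>k. r' t k + Dop w1 w2 (r t) k + complex_of_real rb * div2 (v1 t) (v2 t) k)
       = Brow1 \<epsilon> Dt Dx1 Dx2 rb ab w1 w2 b1 b2 b3 (r t) (v1 t) (v2 t)"
    and eq_u1: "\<And>t. t \<ge> 0 \<Longrightarrow>
       (\<lambda>k. v1' t k + Dop w1 w2 (v1 t) k + complex_of_real (ab\<^sup>2 / (rb * \<epsilon>\<^sup>2)) * dx1 (r t) k)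
       = Brow2 1 \<epsilon> Dt Dx1 Dx2 rb ab w1 w2 b1 b2 b3 (r t) (v1 t) (v2 t)"
    and eq_u2: "\<And>t. t \<ge> 0 \<Longrightarrow>
       (\<lambda>k. v2' t k + Dop w1 w2 (v2 t) k + complex_of_real (ab\<^sup>2 / (rb * \<epsilon>\<^sup>2)) * dx2 (r t) k)
       = Brow2 2 \<epsilon> Dt Dx1 Dx2 rb ab w1 w2 b1 b2 b3 (r t) (v1 t) (v2 t)"
    and init: "(r 0, v1 0, v2 0) \<in> Eset"
  shows "\<forall>t>0. (r t, v1 t, v2 t) \<in> Eset"
proof -
  have key: "r t (a, b) = 0 \<and> of_int a * v1 t (a, b) + of_int b * v2 t (a, b) = 0"
    if ab0: "(a, b) \<noteq> (0, 0)" and t: "t \<ge> 0" for a b :: int and t :: real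
  proof -
    define \<omega> where "\<omega> = w1 * of_int a + w2 * of_int b"
    define K :: real where "K = (of_int a)\<^sup>2 + (of_int b)\<^sup>2"
    define KK :: complex where "KK = of_int a * of_int a + of_int b * of_int b"
    define N where "N = 1/2 * (Dx1 * \<bar>w1\<bar> * (of_int a)\<^sup>2 + Dx2 * \<bar>w2\<bar> * (of_int b)\<^sup>2)"
    define \<alpha> where "\<alpha> = of_real Dt * (of_real b1 * - of_real (\<omega>\<^sup>2) + of_real (b3 * ab\<^sup>2 / \<epsilon>\<^sup>2) * - of_real K) - of_real N - \<i> * of_real \<omega>"
    define \<beta> where "\<beta> = - (of_real (Dt * rb * b2) * of_real \<omega>) - of_real rb * \<i>"
    define \<delta> where "\<delta> = of_real Dt * (of_real b1 * - of_real (\<omega>\<^sup>2) + of_real (b3 * ab\<^sup>2 / \<epsilon>\<^sup>2) * - KK) - of_real N - \<i> * of_real \<omega>"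
    define \<gamma> where "\<gamma> = of_real (Dt * ab\<^sup>2 / (rb * \<epsilon>\<^sup>2) * b2) * - (of_real \<omega> * KK) - of_real (ab\<^sup>2 / (rb * \<epsilon>\<^sup>2)) * \<i> * KK"
    define y where "y = (\<lambda>s. r s (a, b))"
    define y' where "y' = (\<lambda>s. r' s (a, b))"
    define z where "z = (\<lambda>s. of_int a * v1 s (a, b) + of_int b * v2 s (a, b))"
    define z' where "z' = (\<lambda>s. of_int a * v1' s (a, b) + of_int b * v2' s (a, b))"
    have ey: "y' s = \<alpha> * y s + \<beta> * z s" if "s \<ge> 0" for s
    proof -
      have h: "r' s (a,b) + Dop w1 w2 (r s) (a,b) + complex_of_real rb * div2 (v1 s) (v2 s) (a,b)
         = Brow1 \<epsilon> Dt Dx1 Dx2 rb ab w1 w2 b1 b2 b3 (r s) (v1 s) (v2 s) (a,b)"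
        using fun_cong[OF eq_rho[OF that], of "(a,b)"] by simp
      then have "r' s (a,b) = Brow1 \<epsilon> Dt Dx1 Dx2 rb ab w1 w2 b1 b2 b3 (r s) (v1 s) (v2 s) (a,b)
          - Dop w1 w2 (r s) (a,b) - complex_of_real rb * div2 (v1 s) (v2 s) (a,b)"
        by (simp add: algebra_simps)
      also have "\<dots> = \<alpha> * y s + \<beta> * z s"
        unfolding Brow1_def DopDop lap_at numdiff_at Dop_div2 Dop_at div2_at
        unfolding y_def z_def \<alpha>_def \<beta>_def \<omega>_def K_def N_def
        using pos by (simp add: field_simps power2_eq_square)
      finally show ?thesis unfolding y'_def .
    qed
    have ez: "z' s = \<gamma> * y s + \<delta> * z s" if "s \<ge> 0" for s
    proof -
      have h1: "v1' s (a,b) + Dop w1 w2 (v1 s) (a,b) + complex_of_real (ab\<^sup>2 / (rb * \<epsilon>\<^sup>2)) * dx1 (r s) (a,b)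
         = Brow2 1 \<epsilon> Dt Dx1 Dx2 rb ab w1 w2 b1 b2 b3 (r s) (v1 s) (v2 s) (a,b)"
        using fun_cong[OF eq_u1[OF that], of "(a,b)"] by simp
      have h2: "v2' s (a,b) + Dop w1 w2 (v2 s) (a,b) + complex_of_real (ab\<^sup>2 / (rb * \<epsilon>\<^sup>2)) * dx2 (r s) (a,b)
         = Brow2 2 \<epsilon> Dt Dx1 Dx2 rb ab w1 w2 b1 b2 b3 (r s) (v1 s) (v2 s) (a,b)"
        using fun_cong[OF eq_u2[OF that], of "(a,b)"] by simp
      have "z' s = of_int a * (Brow2 1 \<epsilon> Dt Dx1 Dx2 rb ab w1 w2 b1 b2 b3 (r s) (v1 s) (v2 s) (a,b)
           - Dop w1 w2 (v1 s) (a,b) - complex_of_real (ab\<^sup>2 / (rb * \<epsilon>\<^sup>2)) * dx1 (r s) (a,b))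
         + of_int b * (Brow2 2 \<epsilon> Dt Dx1 Dx2 rb ab w1 w2 b1 b2 b3 (r s) (v1 s) (v2 s) (a,b)
           - Dop w1 w2 (v2 s) (a,b) - complex_of_real (ab\<^sup>2 / (rb * \<epsilon>\<^sup>2)) * dx2 (r s) (a,b))"
      proof -
        have e1: "v1' s (a,b) = Brow2 1 \<epsilon> Dt Dx1 Dx2 rb ab w1 w2 b1 b2 b3 (r s) (v1 s) (v2 s) (a,b)
           - Dop w1 w2 (v1 s) (a,b) - complex_of_real (ab\<^sup>2 / (rb * \<epsilon>\<^sup>2)) * dx1 (r s) (a,b)"
          by (subst h1[symmetric]) simp
        have e2: "v2' s (a,b) = Brow2 2 \<epsilon> Dt Dx1 Dx2 rb ab w1 w2 b1 b2 b3 (r s) (v1 s) (v2 s) (a,b)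
           - Dop w1 w2 (v2 s) (a,b) - complex_of_real (ab\<^sup>2 / (rb * \<epsilon>\<^sup>2)) * dx2 (r s) (a,b)"
          by (subst h2[symmetric]) simp
        show ?thesis unfolding z'_def e1 e2 ..
      qed
      also have "\<dots> = \<gamma> * y s + \<delta> * z s"
      proof -
        have n21: "((2::nat) = 1) = False" by simp
        have B1: "Brow2 1 \<epsilon> Dt Dx1 Dx2 rb ab w1 w2 b1 b2 b3 (r s) (v1 s) (v2 s) (a,b) =
          of_real (Dt * ab\<^sup>2 / (rb * \<epsilon>\<^sup>2) * b2) * - (of_real \<omega> * (of_int a * r s (a,b)))
          + of_real Dt * (of_real b1 * - (of_real (\<omega>\<^sup>2) * v1 s (a,b))
             + of_real (b3 * ab\<^sup>2 / \<epsilon>\<^sup>2) * - (of_int a * (of_int a * v1 s (a,b) + of_int b * v2 s (a,b))))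
          + - (of_real N * v1 s (a,b))"
          unfolding Brow2_def dxj_def \<omega>_def N_def
          by (simp only: simp_thms if_True DopDop Dop_dx1 dx1_div2 numdiff_at fst_conv snd_conv)
        have B2: "Brow2 2 \<epsilon> Dt Dx1 Dx2 rb ab w1 w2 b1 b2 b3 (r s) (v1 s) (v2 s) (a,b) =
          of_real (Dt * ab\<^sup>2 / (rb * \<epsilon>\<^sup>2) * b2) * - (of_real \<omega> * (of_int b * r s (a,b)))
          + of_real Dt * (of_real b1 * - (of_real (\<omega>\<^sup>2) * v2 s (a,b))
             + of_real (b3 * ab\<^sup>2 / \<epsilon>\<^sup>2) * - (of_int b * (of_int a * v1 s (a,b) + of_int b * v2 s (a,b))))
          + - (of_real N * v2 s (a,b))"
          unfolding Brow2_def dxj_def \<omega>_def N_def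
          by (simp only: n21 simp_thms if_False DopDop Dop_dx2 dx2_div2 numdiff_at fst_conv snd_conv)
        show ?thesis
          unfolding B1 B2 Dop_at dx1_at dx2_at fst_conv snd_conv \<omega>_def[symmetric]
          unfolding y_def z_def \<gamma>_def \<delta>_def KK_def
          by (rule alg_z)
      qed
      finally show ?thesis .
    qed
    have dy1: "((\<lambda>s. Re (y s)) has_real_derivative Re (y' s)) (at s within {0..})"
      and dy2: "((\<lambda>s. Im (y s)) has_real_derivative Im (y' s)) (at s within {0..})"
      if "s \<ge> 0" for s
      unfolding y_def y'_def using coef_deriv[OF reg(1) that] by auto
    have dz1: "((\<lambda>s. Re (z s)) has_real_derivative Re (z' s)) (at s within {0..})"
      and dz2: "((\<lambda>s. Im (z s)) has_real_derivative Im (z' s)) (at s within {0..})"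
      if "s \<ge> 0" for s
    proof -
      note A = coef_deriv[OF reg(2) that, of "(a,b)"] and B = coef_deriv[OF reg(3) that, of "(a,b)"]
      have "((\<lambda>s. of_int a * Re (v1 s (a,b)) + of_int b * Re (v2 s (a,b))) has_real_derivative
          of_int a * Re (v1' s (a,b)) + of_int b * Re (v2' s (a,b))) (at s within {0..})"
        by (intro DERIV_add DERIV_cmult A B)
      then show "((\<lambda>s. Re (z s)) has_real_derivative Re (z' s)) (at s within {0..})"
        unfolding z_def z'_def by simp
      have "((\<lambda>s. of_int a * Im (v1 s (a,b)) + of_int b * Im (v2 s (a,b))) has_real_derivative
          of_int a * Im (v1' s (a,b)) + of_int b * Im (v2' s (a,b))) (at s within {0..})"
        by (intro DERIV_add DERIV_cmult A B)
      then show "((\<lambda>s. Im (z s)) has_real_derivative Im (z' s)) (at s within {0..})"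
        unfolding z_def z'_def by simp
    qed
    have y0: "y 0 = 0"
    proof -
      have "dx1 (r 0) (a,b) = 0" "dx2 (r 0) (a,b) = 0" using init unfolding Eset_def by auto
      then show ?thesis using ab0 unfolding y_def dx1_def dx2_def by auto
    qed
    have z0: "z 0 = 0"
    proof -
      have "div2 (v1 0) (v2 0) (a,b) = 0" using init unfolding Eset_def by auto
      then show ?thesis unfolding z_def div2_at by simp
    qed
    show ?thesis
      using lin_ode_zero[OF dy1 dy2 dz1 dz2 ey ez y0 z0 t] unfolding y_def z_def by simp
  qed
  show ?thesis
  proof (intro allI impI)
    fix t :: real assume tp: "t > 0"
    then have t: "t \<ge> 0" by simp
    have H: "r t \<in> H2" "v1 t \<in> H2" "v2 t \<in> H2" using reg t unfolding C1_H2_def by auto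
    have L: "c \<in> L2" if "c \<in> H2" for c
    proof -
      have "(\<lambda>k. (cmod (c k))\<^sup>2) summable_on UNIV"
        by (rule summable_on_comparison_test[of "\<lambda>k. sob_weight k * (cmod (c k))\<^sup>2"])
           (use that sob_ge1 in \<open>auto simp: H2_def mult_le_cancel_right1\<close>)
      then show ?thesis using that unfolding H2_def L2_def by auto
    qed
    have k0: "r t (a,b) = 0" "of_int a * v1 t (a, b) + of_int b * v2 t (a, b) = 0"
      if "(a,b) \<noteq> (0,0)" for a b using key[OF that t] by auto
    have "dx1 (r t) = (\<lambda>k. 0)"
    proof
      fix k :: "int \<times> int" obtain a b where k: "k = (a,b)" by fastforce
      show "dx1 (r t) k = 0" using k0[of a b] unfolding k dx1_def by (cases "(a,b) = (0,0)") auto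
    qed
    moreover have "dx2 (r t) = (\<lambda>k. 0)"
    proof
      fix k :: "int \<times> int" obtain a b where k: "k = (a,b)" by fastforce
      show "dx2 (r t) k = 0" using k0[of a b] unfolding k dx2_def by (cases "(a,b) = (0,0)") auto
    qed
    moreover have "div2 (v1 t) (v2 t) = (\<lambda>k. 0)"
    proof
      fix k :: "int \<times> int" obtain a b where k: "k = (a,b)" by fastforce
      show "div2 (v1 t) (v2 t) k = 0" using k0[of a b] unfolding k div2_at by (cases "(a,b) = (0,0)") auto
    qed
    ultimately show "(r t, v1 t, v2 t) \<in> Eset" using L H unfolding Eset_def by auto
  qed
qed

end
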